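(* For every $d$ with $0\le d\le\rho(m)-1$, letting $L_4(d)=L_1(d)+h+d+1-\rho(m)(1+p_d)$, we have for every integer $t\ge 0$ \[ z\big(t+L_4(d),\,d\big)=w\big(t+h+d+1-\rho(m)(1+p_d),\,d\big). \]
   Context: For $u\in\mathbb{R}$ let $\mathbf 1[u]=1$ if $u\ge 0$ and $\mathbf 1[u]=0$ if $u<0$. Let $m$ be a positive integer and let $\rho(m)$ denote the number of primes $p$ with $2m<p<3m$; assume $\rho(m)\ge 2$. List these primes as $p_0>p_1>\dots>p_{\rho(m)-1}$ and put $\alpha_i=3m-p_i$. Let $k=(6m-1)\rho(m)$, $\mu_i=\lfloor k/p_i\rfloor$, $\beta_i=k-p_i\mu_i$. Define weights $\bar a_j$, $1\le j\le k$: if $\rho(m)$ is even, $\bar a_j=2$ if $j=\ell p_i$ for some $i$ and some $\ell$ with $1\le \ell\le 3\rho(m)/2$, $\bar a_j=-2$ if $j=\ell p_i$ with $3\rho(m)/2<\ell\le 2\rho(m)$, and $\bar a_j=0$ otherwise; if $\rho(m)$ is odd, $\bar a_j=2$ if $j=\ell p_i$ with $1\le\ell\le (3\rho(m)-1)/2$, $\bar a_j=-2$ if $j=\ell p_i$ with $(3\rho(m)+1)/2\le \ell\le 2\rho(m)-2$, $\bar a_j=-1$ if $j=\ell p_i$ with $\ell\in\{2\rho(m)-1,2\rho(m)\}$, and $\bar a_j=0$ otherwise (well defined since the sets $\{\ell p_i:1\le\ell\le2\rho(m)\}$ are pairwise disjoint). Let $\bar\theta=2\rho(m)$. For each $i$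 define $x^{\alpha_i}(t)$ for $0\le t\le k-1$ by $x^{\alpha_i}(t)=1$ if $t=\beta_i+\ell p_i$ for some $0\le \ell\le\mu_i-1$ and $x^{\alpha_i}(t)=0$ otherwise, and for $t\ge k$ by $x^{\alpha_i}(t)=\mathbf 1\big[\sum_{j=1}^k \bar a_j x^{\alpha_i}(t-j)-\bar\theta\big]$. Let $h=\rho(m)k$. For $1\le f\le h$ let $b_f=\bar a_j$ if $f=\rho(m)j$ with $1\le j\le k$, and $b_f=0$ otherwise. Define $(y(n))_{n\ge0}$ by $y(\rho(m)j+i)=x^{\alpha_i}(1+j)$ for $0\le j\le k-1$, $0\le i\le\rho(m)-1$, and $y(n)=\mathbf 1\big[\sum_{f=1}^h b_f y(n-f)-\bar\theta\big]$ for $n\ge h$. Let $L_1(d)=\rho(m)\cdot\mathrm{lcm}(p_0,\dots,p_d)$ for $0\le d\le\rho(m)-1$. For $0\le d\le\rho(m)-1$ define $(w(n,d))_{n\ge0}$ by: for $0\le i\le d$, $w(\rho(m)j+i,d)=x^{\alpha_i}(1+j)$ for $0\le j\le k-2$ and $w(\rho(m)(k-1)+i,d)=1-x^{\alpha_i}(k)$; for $d+1\le i\le\rho(m)-1$ and $0\le j\le k-1$, $w(\rho(m)j+i,d)=y(\rho(m)j+i+L_1(d))$; and $w(n,d)=\mathbf 1\big[\sum_{f=1}^h b_f w(n-f,d)-\bar\theta\big]$ for $n\ge h$. For $0\le d\le\rho(m)-1$ let $B_0(d)=\{f\in\mathbb Z:\ 1\le f\le h-d,\ y(h+L_1(d)-\rho(m)-f)=1\}$,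 $B_{\ell+1}(d)=\{1+f: f\in B_\ell(d)\}$ for $\ell\ge0$, $A(d)=\bigcup_{\ell=0}^{d}B_\ell(d)$, and $Tot(d)=|B_0(d)|$. Fix a real number $\lambda$ with $-1\le\lambda<0$. Put $\beta(d)=\lambda/Tot(d)$, $\xi(d)=\lambda-\beta(d)/8$, $\theta_2(d)=\bar\theta+\xi(d)$, and for $1\le f\le h$ let $c(f,d)=b_f+\beta(d)$ if $f\in A(d)$ and $c(f,d)=b_f$ otherwise. Define $(z(n,d))_{n\ge0}$ by $z(n,d)=y(n)$ for $0\le n\le h-1$ and $z(n,d)=\mathbf 1\big[\sum_{f=1}^h c(f,d)\,z(n-f,d)-\theta_2(d)\big]$ for $n\ge h$. *)

theory Defs
  imports Complex_Main "HOL-Computational_Algebra.Primes"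
begin

definition step :: "real \<Rightarrow> real" where
  "step u = (if u \<ge> 0 then 1 else 0)"

function thr :: "nat \<Rightarrow> (nat \<Rightarrow> real) \<Rightarrow> real \<Rightarrow> (nat \<Rightarrow> real) \<Rightarrow> nat \<Rightarrow> real" where
  "thr K a th init n =
     (if n < K then init n
      else step ((\<Sum>j\<in>{1..K}. a j * thr K a th init (n - j)) - th))"
  by pat_completeness auto
termination
  by (relation "measure (\<lambda>(K, a, th, init, n). n)") auto

definition Pset :: "nat \<Rightarrow> nat set" where
  "Pset m = {p. prime p \<and> 2 * m < p \<and> p < 3 * m}"

definition rho :: "nat \<Rightarrow> nat" where
  "rho m = card (Pset m)"

definition pr :: "nat \<Rightarrow> nat \<Rightarrow> nat" where
  "pr m i = rev (sorted_list_of_set (Pset m)) ! i"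

definition kk :: "nat \<Rightarrow> nat" where
  "kk m = (6 * m - 1) * rho m"

definition mu :: "nat \<Rightarrow> nat \<Rightarrow> nat" where
  "mu m i = kk m div pr m i"

definition beta0 :: "nat \<Rightarrow> nat \<Rightarrow> nat" where
  "beta0 m i = kk m - pr m i * mu m i"

definition abar :: "nat \<Rightarrow> nat \<Rightarrow> real" where
  "abar m j =
    (let r = rho m;
         M = (\<lambda>P. \<exists>i<r. \<exists>l. P l \<and> j = l * pr m i) in
     if even r then
       (if M (\<lambda>l. 1 \<le> l \<and> 2 * l \<le> 3 * r) then 2
        else if M (\<lambda>l. 3 * r < 2 * l \<and> l \<le> 2 * r) then -2
        else 0)
     else
       (if M (\<lambda>l. 1 \<le> l \<and> 2 * l \<le> 3 * r - 1) then 2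
        else if M (\<lambda>l. 3 * r + 1 \<le> 2 * l \<and> l \<le> 2 * r - 2) then -2
        else if M (\<lambda>l. l = 2 * r - 1 \<or> l = 2 * r) then -1
        else 0))"

definition thetabar :: "nat \<Rightarrow> real" where
  "thetabar m = 2 * real (rho m)"

definition xx :: "nat \<Rightarrow> nat \<Rightarrow> nat \<Rightarrow> real" where
  "xx m i = thr (kk m) (abar m) (thetabar m)
     (\<lambda>t. if \<exists>l. l < mu m i \<and> t = beta0 m i + l * pr m i then 1 else 0)"

definition hh :: "nat \<Rightarrow> nat" where
  "hh m = rho m * kk m"

definition bb :: "nat \<Rightarrow> nat \<Rightarrow> real" where
  "bb m f = (if \<exists>j. 1 \<le> j \<and> j \<le> kk m \<and> f = rho m * j then abar m (f div rho m) else 0)"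

definition yy :: "nat \<Rightarrow> nat \<Rightarrow> real" where
  "yy m = thr (hh m) (bb m) (thetabar m)
     (\<lambda>n. xx m (n mod rho m) (1 + n div rho m))"

definition L1 :: "nat \<Rightarrow> nat \<Rightarrow> nat" where
  "L1 m d = rho m * Lcm (pr m ` {0..d})"

definition ww :: "nat \<Rightarrow> nat \<Rightarrow> nat \<Rightarrow> real" where
  "ww m d = thr (hh m) (bb m) (thetabar m)
     (\<lambda>n. let i = n mod rho m; j = n div rho m in
          if i \<le> d then
            (if j \<le> kk m - 2 then xx m i (1 + j) else 1 - xx m i (kk m))
          else yy m (n + L1 m d))"

definition B0 :: "nat \<Rightarrow> nat \<Rightarrow> nat set" where
  "B0 m d = {f. 1 \<le> f \<and> f \<le> hh m - d \<and> yy m (hh m + L1 m d - rho m - f) = 1}"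

definition Bl :: "nat \<Rightarrow> nat \<Rightarrow> nat \<Rightarrow> nat set" where
  "Bl m d l = (\<lambda>f. l + f) ` B0 m d"

definition AA :: "nat \<Rightarrow> nat \<Rightarrow> nat set" where
  "AA m d = (\<Union>l\<in>{0..d}. Bl m d l)"

definition Tot :: "nat \<Rightarrow> nat \<Rightarrow> nat" where
  "Tot m d = card (B0 m d)"

definition betad :: "nat \<Rightarrow> real \<Rightarrow> nat \<Rightarrow> real" where
  "betad m lam d = lam / real (Tot m d)"

definition xi :: "nat \<Rightarrow> real \<Rightarrow> nat \<Rightarrow> real" where
  "xi m lam d = lam - betad m lam d / 8"

definition theta2 :: "nat \<Rightarrow> real \<Rightarrow> nat \<Rightarrow> real" where
  "theta2 m lam d = thetabar m + xi m lam d"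

definition cc :: "nat \<Rightarrow> real \<Rightarrow> nat \<Rightarrow> nat \<Rightarrow> real" where
  "cc m lam f d = (if f \<in> AA m d then bb m f + betad m lam d else bb m f)"

definition zz :: "nat \<Rightarrow> real \<Rightarrow> nat \<Rightarrow> nat \<Rightarrow> real" where
  "zz m lam d = thr (hh m) (\<lambda>f. cc m lam f d) (theta2 m lam d) (yy m)"

end

theory Submission
  imports Defs
begin


lemma Pset_finite: "finite (Pset m)"
  unfolding Pset_def by (rule finite_subset[of _ "{..<3*m}"]) auto

definition wt :: "nat \<Rightarrow> nat \<Rightarrow> real" where
"wt r l = (if even r then (if 1 \<le> l \<and> 2*l \<le> 3*r then 2 else if 3*r < 2*l \<and> l \<le> 2*r then -2 else 0)
   else (if 1 \<le> l \<and> 2*l \<le> 3*r - 1 then 2 else if 3*r+1 \<le> 2*l \<and> l \<le> 2*r - 2 then -2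
   else if l = 2*r-1 \<or> l = 2*r then -1 else 0))"


lemma ps_even:
  assumes "r = 2*a" "a \<ge> 1"
  shows "g \<le> 2*r \<Longrightarrow> (\<Sum>l\<in>{1..g}. wt r l) = (if g \<le> 3*a then 2 * real g else 12 * real a - 2 * real g)"
proof (induction g)
  case 0 then show ?case by simp
next
  case (Suc g)
  then have IH: "(\<Sum>l\<in>{1..g}. wt r l) = (if g \<le> 3*a then 2 * real g else 12 * real a - 2 * real g)" by simp
  have "(\<Sum>l\<in>{1..Suc g}. wt r l) = (\<Sum>l\<in>{1..g}. wt r l) + wt r (Suc g)" by simp
  also have "wt r (Suc g) = (if Suc g \<le> 3*a then 2 else -2)"
    using Suc.prems assms by (simp add: wt_def)
  finally show ?case using IH by (auto simp: field_simps)
qed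

lemma ps_odd:
  assumes "r = 2*a+1" "a \<ge> 1"
  shows "g \<le> 2*r \<Longrightarrow> (\<Sum>l\<in>{1..g}. wt r l) = (if g \<le> 3*a+1 then 2 * real g else if g \<le> 4*a then 12 * real a + 4 - 2 * real g
     else if g = 4*a+1 then 4 * real a + 3 else 4 * real a + 2)"
proof (induction g)
  case 0 then show ?case by simp
next
  case (Suc g)
  then have IH: "(\<Sum>l\<in>{1..g}. wt r l) = (if g \<le> 3*a+1 then 2 * real g else if g \<le> 4*a then 12 * real a + 4 - 2 * real g
     else if g = 4*a+1 then 4 * real a + 3 else 4 * real a + 2)" by simp
  have "(\<Sum>l\<in>{1..Suc g}. wt r l) = (\<Sum>l\<in>{1..g}. wt r l) + wt r (Suc g)" by simp
  also have "wt r (Suc g) = (if Suc g \<le> 3*a+1 then 2 else if Suc g \<le> 4*a then -2 else -1)"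
    using Suc.prems assms by (simp add: wt_def)
  finally show ?case using IH Suc.prems assms by (auto simp: field_simps)
qed

lemma ps_total: "r \<ge> 2 \<Longrightarrow> (\<Sum>l\<in>{1..2*r}. wt r l) = 2 * real r"
proof -
  assume r: "r \<ge> 2"
  show ?thesis
  proof (cases "even r")
    case True then obtain a where a: "r = 2*a" by blast
    with r have "a \<ge> 1" by simp
    from ps_even[OF a this, of "2*r"] show ?thesis using a by simp
  next
    case False then obtain a where a: "r = 2*a+1" using oddE by blast
    with r have "a \<ge> 1" by simp
    from ps_odd[OF a this, of "2*r"] show ?thesis using a by simp
  qed
qed

lemma ps_ge2: "r \<ge> 2 \<Longrightarrow> 1 \<le> g \<Longrightarrow> g \<le> 2*r \<Longrightarrow> (\<Sum>l\<in>{1..g}. wt r l) \<ge> 2"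
proof -
  assume r: "r \<ge> 2" and g: "1 \<le> g" "g \<le> 2*r"
  show ?thesis
  proof (cases "even r")
    case True then obtain a where a: "r = 2*a" by blast
    with r have "a \<ge> 1" by simp
    from ps_even[OF a this g(2)] show ?thesis using a g by auto
  next
    case False then obtain a where a: "r = 2*a+1" using oddE by blast
    with r have "a \<ge> 1" by simp
    from ps_odd[OF a this g(2)] show ?thesis using a g by auto
  qed
qed

locale S =
  fixes m :: nat
  assumes m1: "m \<ge> 1" and r2: "rho m \<ge> 2"
begin

abbreviation "r \<equiv> rho m"
abbreviation "p \<equiv> pr m"
abbreviation "k \<equiv> kk m"
abbreviation "h \<equiv> hh m"

lemma len_L: "length (rev (sorted_list_of_set (Pset m))) = r"
  by (simp add: rho_def Pset_finite)

lemma p_in: "i < r \<Longrightarrow> p i \<in> Pset m"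
proof -
  assume "i < r"
  then have "rev (sorted_list_of_set (Pset m)) ! i \<in> set (rev (sorted_list_of_set (Pset m)))"
    using len_L by (intro nth_mem) simp
  then show ?thesis by (simp add: pr_def Pset_finite)
qed

lemma p_prime: "i < r \<Longrightarrow> prime (p i)" using p_in by (simp add: Pset_def)
lemma p_lo: "i < r \<Longrightarrow> 2*m < p i" using p_in by (simp add: Pset_def)
lemma p_hi: "i < r \<Longrightarrow> p i < 3*m" using p_in by (simp add: Pset_def)

lemma p_inj: "i < r \<Longrightarrow> j < r \<Longrightarrow> p i = p j \<Longrightarrow> i = j"
  unfolding pr_def using len_L
  by (metis distinct_rev distinct_sorted_list_of_set nth_eq_iff_index_eq)

lemma p_coprime: "i < r \<Longrightarrow> j < r \<Longrightarrow> i \<noteq> j \<Longrightarrow> coprime (p i) (p j)"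
  using p_inj p_prime primes_coprime by blast

lemma r_bound: "2 * r \<le> m"
proof -
  have "inj_on (\<lambda>q. q div 2 - m) (Pset m)"
  proof (rule inj_onI)
    fix x y assume x: "x \<in> Pset m" and y: "y \<in> Pset m" and e: "x div 2 - m = y div 2 - m"
    have ox: "odd x" using x m1 unfolding Pset_def by (intro prime_odd_nat) auto
    have oy: "odd y" using y m1 unfolding Pset_def by (intro prime_odd_nat) auto
    have "x div 2 \<ge> m" "y div 2 \<ge> m" using x y unfolding Pset_def by auto
    then have "x div 2 = y div 2" using e by simp
    then show "x = y" using ox oy by (metis odd_two_times_div_two_succ)
  qed
  moreover have "(\<lambda>q. q div 2 - m) ` Pset m \<subseteq> {..< m div 2}"
  proof
    fix z assume "z \<in> (\<lambda>q. q div 2 - m) ` Pset m"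
    then obtain q where q: "q \<in> Pset m" "z = q div 2 - m" by auto
    have "2*m < q" "q < 3*m" using q unfolding Pset_def by auto
    moreover have "odd q" using q(1) m1 unfolding Pset_def by (intro prime_odd_nat) auto
    ultimately have "q div 2 - m < m div 2" by (elim oddE) presburger
    then show "z \<in> {..< m div 2}" using q(2) by simp
  qed
  ultimately have "card (Pset m) \<le> card {..< m div 2}"
    by (meson card_inj_on_le finite_lessThan)
  then show ?thesis by (simp add: rho_def)
qed

lemma k_def': "k = (6*m - 1) * r" by (simp add: kk_def)
lemma h_def': "h = r * k" by (simp add: hh_def)

lemma r_pos: "r > 0" using r2 by simp

lemma p_pos: "i < r \<Longrightarrow> p i > 0" using p_lo by fastforce

lemma two_r_lt_p: "i < r \<Longrightarrow> 2 * r < p i"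
  using r_bound p_lo[of i] by linarith

lemma rp_le: "i < r \<Longrightarrow> 2 * r * p i + r \<le> k"
proof -
  assume i: "i < r"
  have "2 * p i \<le> 6*m - 2" using p_hi[OF i] by linarith
  then have "r * (2 * p i) \<le> r * (6*m - 2)" by (rule mult_le_mono2)
  moreover have "r * (6*m - 2) + r = k" using m1 by (simp add: k_def' algebra_simps)
  ultimately show ?thesis by (simp add: algebra_simps)
qed

lemma k_le_pp: "i < r \<Longrightarrow> j < r \<Longrightarrow> k \<le> p i * p j"
proof -
  assume i: "i < r" and j: "j < r"
  have a: "(2*m+1)*(2*m+1) \<le> p i * p j"
    using p_lo[OF i] p_lo[OF j] by (intro mult_le_mono) auto
  have "2 * k = (6*m - 1) * (2 * r)" by (simp add: k_def')
  also have "\<dots> \<le> (6*m - 1) * m" using r_bound by (intro mult_le_mono2)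
  also have "\<dots> \<le> 2 * ((2*m+1)*(2*m+1))" by (simp add: algebra_simps diff_mult_distrib)
  finally show ?thesis using a by linarith
qed

lemma uniq: "i < r \<Longrightarrow> i' < r \<Longrightarrow> 1 \<le> l' \<Longrightarrow> l' \<le> 2*r \<Longrightarrow> 1 \<le> l \<Longrightarrow>
   l * p i = l' * p i' \<Longrightarrow> i' = i \<and> l' = l"
proof -
  assume i: "i < r" and i': "i' < r" and l': "1 \<le> l'" "l' \<le> 2*r" and l: "1 \<le> l"
    and e: "l * p i = l' * p i'"
  have ii: "i' = i"
  proof (rule ccontr)
    assume "i' \<noteq> i"
    then have "coprime (p i) (p i')" using p_coprime i i' by auto
    moreover have "p i dvd l' * p i'" using e by (metis dvd_triv_right)
    ultimately have "p i dvd l'" using coprime_dvd_mult_left_iff by blast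
    then have "p i \<le> l'" using l' by (simp add: dvd_imp_le)
    then show False using two_r_lt_p[OF i] l' by linarith
  qed
  then show ?thesis using e p_pos[OF i] by simp
qed

lemma M_iff:
  assumes i: "i < r" and l: "1 \<le> l" "l \<le> 2*r"
    and bnd: "\<And>l'. P l' \<Longrightarrow> 1 \<le> l' \<and> l' \<le> 2*r"
  shows "(\<exists>i'<r. \<exists>l'. P l' \<and> l * p i = l' * p i') \<longleftrightarrow> P l"
proof
  assume "\<exists>i'<r. \<exists>l'. P l' \<and> l * p i = l' * p i'"
  then obtain i' l' where "i' < r" "P l'" "l * p i = l' * p i'" by blast
  then show "P l" using uniq[OF i, of i' l' l] bnd[of l'] l by auto
next
  assume "P l" then show "\<exists>i'<r. \<exists>l'. P l' \<and> l * p i = l' * p i'" using i by blast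
qed

lemma abar_lp:
  assumes i: "i < r" and l: "1 \<le> l" "l \<le> 2*r"
  shows "abar m (l * p i) = wt r l"
proof -
  have r2': "r \<ge> 2" using r2 .
  note M = M_iff[OF i l]
  have e1: "(\<exists>i'<r. \<exists>l'. (1 \<le> l' \<and> 2 * l' \<le> 3 * r) \<and> l * p i = l' * p i') \<longleftrightarrow> (1 \<le> l \<and> 2 * l \<le> 3 * r)"
    by (rule M) auto
  have e2: "(\<exists>i'<r. \<exists>l'. (3 * r < 2 * l' \<and> l' \<le> 2 * r) \<and> l * p i = l' * p i') \<longleftrightarrow> (3 * r < 2 * l \<and> l \<le> 2 * r)"
    by (rule M) auto
  have e3: "(\<exists>i'<r. \<exists>l'. (1 \<le> l' \<and> 2 * l' \<le> 3 * r - 1) \<and> l * p i = l' * p i') \<longleftrightarrow> (1 \<le> l \<and> 2 * l \<le> 3 * r - 1)"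
    by (rule M) auto
  have e4: "(\<exists>i'<r. \<exists>l'. (3 * r + 1 \<le> 2 * l' \<and> l' \<le> 2 * r - 2) \<and> l * p i = l' * p i') \<longleftrightarrow> (3 * r + 1 \<le> 2 * l \<and> l \<le> 2 * r - 2)"
    by (rule M) auto
  have e5: "(\<exists>i'<r. \<exists>l'. (l' = 2 * r - 1 \<or> l' = 2 * r) \<and> l * p i = l' * p i') \<longleftrightarrow> (l = 2 * r - 1 \<or> l = 2 * r)"
    by (rule M) (use r2' in auto)
  show ?thesis unfolding abar_def Let_def wt_def
    by (simp only: e1 e2 e3 e4 e5)
qed

lemma abar_nz: "abar m j \<noteq> 0 \<Longrightarrow> \<exists>i<r. \<exists>l. 1 \<le> l \<and> l \<le> 2*r \<and> j = l * p i"
proof -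
  assume nz: "abar m j \<noteq> 0"
  have H: "\<And>P. (\<exists>i<r. \<exists>l. P l \<and> j = l * p i) \<Longrightarrow> (\<And>l. P l \<Longrightarrow> 1 \<le> l \<and> l \<le> 2*r) \<Longrightarrow>
     \<exists>i<r. \<exists>l. 1 \<le> l \<and> l \<le> 2*r \<and> j = l * p i" by blast
  show ?thesis
    using nz unfolding abar_def Let_def
    apply (simp only: split: if_splits)
    apply ((rule_tac x=i in exI, simp, rule_tac x=l in exI, use r2 in linarith)+)[5]
    done
qed

lemma wt_le2: "wt r l \<le> 2" by (simp add: wt_def)
lemma wt_ge: "wt r l \<ge> -2" by (simp add: wt_def)
lemma abar_le2: "abar m j \<le> 2" unfolding abar_def Let_def by simp

end



lemma modd1: "(a::nat) \<le> T \<Longrightarrow> (T - a) mod q = T mod q \<longleftrightarrow> q dvd a"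
  by (metis diff_diff_cancel mod_eq_dvd_iff_nat diff_le_self)
lemma modd2: "(a::nat) \<le> T \<Longrightarrow> b \<le> T \<Longrightarrow> (T - a) mod q = (T - b) mod q \<longleftrightarrow> int q dvd int a - int b"
  by (smt (verit, best) dvd_nat_abs_iff mod_eq_iff_dvd_symdiff_nat of_nat_diff_if)

lemma thr_lt: "n < K \<Longrightarrow> thr K a th init n = init n"
  by (subst thr.simps) simp
lemma thr_ge: "K \<le> n \<Longrightarrow> thr K a th init n = step ((\<Sum>j\<in>{1..K}. a j * thr K a th init (n - j)) - th)"
  by (subst thr.simps) simp

lemma modk: "(k::nat) \<ge> 1 \<Longrightarrow> (1 + t) mod q = k mod q \<longleftrightarrow> t mod q = (k - 1) mod q"
  by (smt (verit, ccfv_SIG) int_ops(4) mod_eq_iff_dvd_symdiff_nat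
    of_nat_diff of_nat_le_1_iff one_of_nat_le_iff plus_1_eq_Suc)
lemma posc: "(P1::nat) mod r = P2 mod r \<Longrightarrow> (P1 div r) mod q = (P2 div r) mod q \<Longrightarrow> int (r*q) dvd int P1 - int P2"
  by (metis int_ops(9) mod_eq_dvd_iff mod_mult2_eq)

context S begin

definition G where "G = (\<lambda>(i,l). l * p i) ` ({..<r} \<times> {1..2*r})"

lemma window_sum:
  "(\<Sum>j\<in>{1..k}. abar m j * u (T - j)) = (\<Sum>i'<r. \<Sum>l\<in>{1..2*r}. wt r l * u (T - l * p i'))"
proof -
  have sub: "G \<subseteq> {1..k}"
  proof
    fix j assume "j \<in> G"
    then obtain i l where il: "i < r" "1 \<le> l" "l \<le> 2*r" "j = l * p i" unfolding G_def by auto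
    have "l * p i \<le> 2 * r * p i" using il by simp
    also have "\<dots> \<le> k" using rp_le[OF il(1)] by simp
    finally show "j \<in> {1..k}" using il p_pos[OF il(1)] by simp
  qed
  have z: "\<forall>j\<in>{1..k} - G. abar m j * u (T - j) = 0"
  proof
    fix j assume "j \<in> {1..k} - G"
    then have "abar m j = 0" using abar_nz unfolding G_def by force
    then show "abar m j * u (T - j) = 0" by simp
  qed
  have "(\<Sum>j\<in>G. abar m j * u (T - j)) = (\<Sum>j\<in>{1..k}. abar m j * u (T - j))"
    by (rule sum.mono_neutral_left[OF _ sub z]) simp
  then have "(\<Sum>j\<in>{1..k}. abar m j * u (T - j)) = (\<Sum>j\<in>G. abar m j * u (T - j))" by simp
  also have "\<dots> = (\<Sum>x\<in>{..<r} \<times> {1..2*r}. abar m (snd x * p (fst x)) * u (T - snd x * p (fst x)))"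
  proof -
    have inj: "inj_on (\<lambda>(i,l). l * p i) ({..<r} \<times> {1..2*r})"
    proof (rule inj_onI)
      fix x y assume x: "x \<in> {..<r} \<times> {1..2*r}" and y: "y \<in> {..<r} \<times> {1..2*r}"
        and e: "(\<lambda>(i,l). l * p i) x = (\<lambda>(i,l). l * p i) y"
      obtain i l where xx: "x = (i,l)" by fastforce
      obtain i' l' where yy: "y = (i',l')" by fastforce
      show "x = y" using uniq[of i i' l' l] x y e unfolding xx yy by auto
    qed
    show ?thesis unfolding G_def by (subst sum.reindex[OF inj]) (simp add: case_prod_beta)
  qed
  also have "\<dots> = (\<Sum>x\<in>{..<r} \<times> {1..2*r}. wt r (snd x) * u (T - snd x * p (fst x)))"
    by (rule sum.cong) (auto simp: abar_lp)
  also have "\<dots> = (\<Sum>i'<r. \<Sum>l\<in>{1..2*r}. wt r l * u (T - l * p i'))"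
    by (simp add: sum.cartesian_product case_prod_beta)
  finally show ?thesis .
qed

lemma lp_le_T: "i' < r \<Longrightarrow> l \<le> 2*r \<Longrightarrow> k \<le> T \<Longrightarrow> l * p i' \<le> T"
proof -
  assume a: "i' < r" "l \<le> 2*r" "k \<le> T"
  have "l * p i' \<le> 2 * r * p i'" using a by simp
  also have "\<dots> \<le> k" using rp_le[OF a(1)] by simp
  finally show ?thesis using a by simp
qed

lemma cross_dvd:
  assumes i: "i < r" and i': "i' < r" and ne: "i' \<noteq> i" and l1: "l1 \<le> 2*r" and l2: "l2 \<le> 2*r"
    and d: "int (p i) dvd int (l1 * p i') - int (l2 * p i')"
  shows "l1 = l2"
proof -
  have "int (l1 * p i') - int (l2 * p i') = (int l1 - int l2) * int (p i')" by (simp add: algebra_simps)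
  moreover have "coprime (int (p i)) (int (p i'))" using p_coprime[OF i i'] ne by simp
  ultimately have "int (p i) dvd int l1 - int l2" using d
    by (metis coprime_dvd_mult_left_iff)
  moreover have "\<bar>int l1 - int l2\<bar> < int (p i)" using two_r_lt_p[OF i] l1 l2 by linarith
  ultimately show ?thesis
  proof -
    assume dv: "int (p i) dvd int l1 - int l2" and lt: "\<bar>int l1 - int l2\<bar> < int (p i)"
    show ?thesis
    proof (rule ccontr)
      assume "l1 \<noteq> l2"
      then have "int l1 - int l2 \<noteq> 0" by simp
      from dvd_imp_le_int[OF this dv] lt show False by simp
    qed
  qed
qed

lemma WL1:
  assumes i: "i < r" and T: "k \<le> T" and u01: "\<forall>t. u t = 0 \<or> u t = 1"
    and us: "\<forall>t. u t = 1 \<longrightarrow> t mod p i = s" and Ts: "T mod p i \<noteq> s"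
  shows "(\<Sum>j\<in>{1..k}. abar m j * u (T - j)) \<le> 2 * (real r - 1)"
proof -
  define inner where "inner i' = (\<Sum>l\<in>{1..2*r}. wt r l * u (T - l * p i'))" for i'
  have a: "inner i = 0" unfolding inner_def
  proof (rule sum.neutral, rule ballI)
    fix l assume l: "l \<in> {1..2*r}"
    have "u (T - l * p i) \<noteq> 1"
    proof
      assume "u (T - l * p i) = 1"
      then have "(T - l * p i) mod p i = s" using us by blast
      moreover have "(T - l * p i) mod p i = T mod p i"
        using modd1[OF lp_le_T[OF i _ T]] l by simp
      ultimately show False using Ts by simp
    qed
    then have "u (T - l * p i) = 0" using u01 by blast
    then show "wt r l * u (T - l * p i) = 0" by simp
  qed
  have b: "inner i' \<le> 2" if i': "i' < r" "i' \<noteq> i" for i'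
  proof -
    define Ls where "Ls = {l \<in> {1..2*r}. u (T - l * p i') = 1}"
    have "inner i' = (\<Sum>l\<in>{1..2*r}. if u (T - l * p i') = 1 then wt r l else 0)"
      unfolding inner_def by (rule sum.cong) (use u01 in \<open>auto\<close>)
    also have "\<dots> = sum (wt r) Ls" unfolding Ls_def by (rule sum.inter_filter[symmetric]) simp
    also have "\<dots> \<le> real (card Ls) * 2" by (rule sum_bounded_above) (simp add: wt_le2)
    also have "card Ls \<le> 1"
    proof -
      have "\<forall>l1\<in>Ls. \<forall>l2\<in>Ls. l1 = l2"
      proof (intro ballI)
        fix l1 l2 assume l1: "l1 \<in> Ls" and l2: "l2 \<in> Ls"
        have "(T - l1 * p i') mod p i = (T - l2 * p i') mod p i" using l1 l2 us unfolding Ls_def by auto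
        then have "int (p i) dvd int (l1 * p i') - int (l2 * p i')"
          using modd2[OF lp_le_T[OF i'(1) _ T] lp_le_T[OF i'(1) _ T]] l1 l2 unfolding Ls_def by auto
        then show "l1 = l2" using cross_dvd[OF i i'(1) i'(2)] l1 l2 unfolding Ls_def by auto
      qed
      then show ?thesis using card_le_Suc0_iff_eq[of Ls] unfolding Ls_def by auto
    qed
    finally show ?thesis by simp
  qed
  have "(\<Sum>j\<in>{1..k}. abar m j * u (T - j)) = (\<Sum>i'<r. inner i')" unfolding inner_def by (rule window_sum)
  also have "\<dots> = inner i + (\<Sum>i'\<in>{..<r} - {i}. inner i')" using i by (simp add: sum.remove)
  also have "\<dots> \<le> 0 + real (card ({..<r} - {i})) * 2"
    using a by (intro add_mono sum_bounded_above) (auto intro: b)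
  also have "\<dots> = 2 * (real r - 1)" using i by (simp add: of_nat_diff)
  finally show ?thesis .
qed

lemma WL2:
  assumes i: "i < r" and T: "k \<le> T"
    and us: "\<forall>t. u t = 1 \<longrightarrow> t mod p i = s" and u01: "\<forall>t. u t = 0 \<or> u t = 1" and Ts: "T mod p i = s"
  shows "(\<Sum>j\<in>{1..k}. abar m j * u (T - j)) = (\<Sum>l\<in>{1..2*r}. wt r l * u (T - l * p i))"
proof -
  define inner where "inner i' = (\<Sum>l\<in>{1..2*r}. wt r l * u (T - l * p i'))" for i'
  have b: "inner i' = 0" if i': "i' < r" "i' \<noteq> i" for i'
    unfolding inner_def
  proof (rule sum.neutral, rule ballI)
    fix l assume l: "l \<in> {1..2*r}"
    have "u (T - l * p i') \<noteq> 1"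
    proof
      assume "u (T - l * p i') = 1"
      then have "(T - l * p i') mod p i = T mod p i" using us Ts by auto
      then have "p i dvd l * p i'"
        using modd1[OF lp_le_T[OF i'(1) _ T]] l by auto
      then have "int (p i) dvd int (l * p i') - int (0 * p i')" by (simp only: int_dvd_int_iff mult_zero_left of_nat_0 diff_zero)
      then have "l = 0" using cross_dvd[OF i i'(1) i'(2), of l 0] l by simp
      then show False using l by simp
    qed
    then show "wt r l * u (T - l * p i') = 0" using u01 by (metis mult_zero_right)
  qed
  have "(\<Sum>j\<in>{1..k}. abar m j * u (T - j)) = (\<Sum>i'<r. inner i')" unfolding inner_def by (rule window_sum)
  also have "\<dots> = inner i + (\<Sum>i'\<in>{..<r} - {i}. inner i')" using i by (simp add: sum.remove)
  also have "\<dots> = inner i" using b by simp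
  finally show ?thesis unfolding inner_def .
qed

lemma k_pos: "k \<ge> 1" using rp_le[OF r_pos] r_pos by linarith

lemma xx_closed: "i < r \<Longrightarrow> xx m i t = (if t mod p i = k mod p i then 1 else 0)"
proof (induction t rule: less_induct)
  case (less t)
  note i = less.prems
  have pp: "p i > 0" using p_pos[OF i] .
  show ?case
  proof (cases "t < k")
    case True
    have "(\<exists>l. l < mu m i \<and> t = beta0 m i + l * p i) \<longleftrightarrow> t mod p i = k mod p i"
    proof
      assume "\<exists>l. l < mu m i \<and> t = beta0 m i + l * p i"
      then obtain l where "t = beta0 m i + l * p i" by blast
      moreover have "beta0 m i = k mod p i" by (simp add: beta0_def mu_def minus_div_mult_eq_mod[symmetric] mult.commute)
      ultimately show "t mod p i = k mod p i" by simp
    next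
      assume e: "t mod p i = k mod p i"
      have b: "beta0 m i = k mod p i" by (simp add: beta0_def mu_def minus_div_mult_eq_mod[symmetric] mult.commute)
      have "t div p i < k div p i"
      proof -
        have "t div p i \<le> k div p i" using True by (simp add: div_le_mono)
        moreover have "t div p i \<noteq> k div p i"
        proof
          assume "t div p i = k div p i"
          then have "t = k" using e by (metis div_mult_mod_eq)
          then show False using True by simp
        qed
        ultimately show ?thesis by simp
      qed
      moreover have "t = beta0 m i + (t div p i) * p i" using e b by (metis mod_div_mult_eq add.commute)
      ultimately show "\<exists>l. l < mu m i \<and> t = beta0 m i + l * p i" unfolding mu_def by blast
    qed
    moreover have "xx m i t = (if \<exists>l. l < mu m i \<and> t = beta0 m i + l * p i then 1 else 0)"
      unfolding xx_def by (rule thr_lt[OF True])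
    ultimately show ?thesis by simp
  next
    case False
    then have T: "k \<le> t" by simp
    define u where "u t' = (if t' mod p i = k mod p i then 1 else (0::real))" for t'
    have "xx m i t = step ((\<Sum>j\<in>{1..k}. abar m j * xx m i (t - j)) - thetabar m)"
      unfolding xx_def by (rule thr_ge[OF T])
    also have "(\<Sum>j\<in>{1..k}. abar m j * xx m i (t - j)) = (\<Sum>j\<in>{1..k}. abar m j * u (t - j))"
    proof (rule sum.cong[OF refl])
      fix j assume "j \<in> {1..k}"
      then have "t - j < t" using T by auto
      then show "abar m j * xx m i (t - j) = abar m j * u (t - j)" using less.IH[OF _ i] unfolding u_def by simp
    qed
    finally have e: "xx m i t = step ((\<Sum>j\<in>{1..k}. abar m j * u (t - j)) - thetabar m)" .
    have u01: "\<forall>t. u t = 0 \<or> u t = 1" and us: "\<forall>t. u t = 1 \<longrightarrow> t mod p i = k mod p i"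
      unfolding u_def by auto
    show ?thesis
    proof (cases "t mod p i = k mod p i")
      case True
      have "(\<Sum>j\<in>{1..k}. abar m j * u (t - j)) = (\<Sum>l\<in>{1..2*r}. wt r l * u (t - l * p i))"
        by (rule WL2[OF i T us u01 True])
      also have "\<dots> = (\<Sum>l\<in>{1..2*r}. wt r l)"
      proof (rule sum.cong[OF refl])
        fix l assume l: "l \<in> {1..2*r}"
        have "(t - l * p i) mod p i = t mod p i" using modd1[OF lp_le_T[OF i _ T]] l by simp
        then show "wt r l * u (t - l * p i) = wt r l" using True unfolding u_def by simp
      qed
      also have "\<dots> = 2 * real r" using ps_total r2 by simp
      finally show ?thesis using e True by (simp add: step_def thetabar_def)
    next
      case False
      have "(\<Sum>j\<in>{1..k}. abar m j * u (t - j)) \<le> 2 * (real r - 1)"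
        by (rule WL1[OF i T u01 us False])
      then show ?thesis using e False by (simp add: step_def thetabar_def)
    qed
  qed
qed

lemma bsum: "(\<Sum>f\<in>{1..h}. bb m f * Y (N - f)) = (\<Sum>j\<in>{1..k}. abar m j * Y (N - r * j))"
proof -
  have inj: "inj_on (\<lambda>j. r * j) {1..k}" using r_pos by (simp add: inj_on_def)
  have "(\<Sum>j\<in>{1..k}. abar m j * Y (N - r * j)) = (\<Sum>j\<in>{1..k}. bb m (r * j) * Y (N - r * j))"
  proof (rule sum.cong[OF refl])
    fix j assume j: "j \<in> {1..k}"
    then have "bb m (r * j) = abar m j" unfolding bb_def using r_pos by auto
    then show "abar m j * Y (N - r * j) = bb m (r * j) * Y (N - r * j)" by simp
  qed
  also have "\<dots> = (\<Sum>f\<in>(\<lambda>j. r * j) ` {1..k}. bb m f * Y (N - f))"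
    by (subst sum.reindex[OF inj]) (simp add: o_def)
  also have "\<dots> = (\<Sum>f\<in>{1..h}. bb m f * Y (N - f))"
  proof (rule sum.mono_neutral_left)
    show "finite {1..h}" by simp
    show "(\<lambda>j. r * j) ` {1..k} \<subseteq> {1..h}" using r_pos by (auto simp: h_def')
    show "\<forall>f\<in>{1..h} - (\<lambda>j. r * j) ` {1..k}. bb m f * Y (N - f) = 0"
      unfolding bb_def by (auto simp: image_iff)
  qed
  finally show ?thesis by simp
qed

lemma h_ge: "h \<le> N \<Longrightarrow> k \<le> N div r"
  using r_pos by (simp add: h_def' less_eq_div_iff_mult_less_eq mult.commute)

lemma pos_sub: "r * j \<le> N \<Longrightarrow> (N - r * j) mod r = N mod r \<and> (N - r * j) div r = N div r - j"
proof -
  assume a: "r * j \<le> N"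
  obtain q c where N: "N = r * q + c" "c < r" using r_pos by (metis mod_less_divisor div_mult_mod_eq mult.commute)
  have "r * j < r * (q + 1)" using a N by simp
  then have "j \<le> q" by (simp only: mult_less_cancel1) simp
  then have "N - r * j = r * (q - j) + c" using N by (simp add: diff_mult_distrib2)
  then show ?thesis using N by simp
qed

lemma yy_xx: "yy m n = xx m (n mod r) (1 + n div r)"
proof (induction n rule: less_induct)
  case (less n)
  show ?case
  proof (cases "n < h")
    case True
    then show ?thesis unfolding yy_def by (simp add: thr_lt)
  next
    case False
    then have N: "h \<le> n" by simp
    have kJ: "k \<le> n div r" using h_ge[OF N] .
    have "yy m n = step ((\<Sum>f\<in>{1..h}. bb m f * yy m (n - f)) - thetabar m)"
      unfolding yy_def by (rule thr_ge[OF N])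
    also have "(\<Sum>f\<in>{1..h}. bb m f * yy m (n - f)) = (\<Sum>j\<in>{1..k}. abar m j * yy m (n - r * j))"
      by (rule bsum)
    also have "\<dots> = (\<Sum>j\<in>{1..k}. abar m j * xx m (n mod r) ((1 + n div r) - j))"
    proof (rule sum.cong[OF refl])
      fix j assume j: "j \<in> {1..k}"
      have rj: "r * j \<le> n" using j N r_pos unfolding h_def' by (metis atLeastAtMost_iff mult_le_mono2 le_trans)
      have "r * j > 0" using j r_pos by simp
      then have "n - r * j < n" using rj by linarith
      then have "yy m (n - r * j) = xx m ((n - r*j) mod r) (1 + (n - r*j) div r)" by (rule less.IH)
      also have "\<dots> = xx m (n mod r) ((1 + n div r) - j)" using pos_sub[OF rj] j kJ by (simp add: Suc_diff_le)
      finally show "abar m j * yy m (n - r * j) = abar m j * xx m (n mod r) ((1 + n div r) - j)" by simp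
    qed
    also have "step (\<dots> - thetabar m) = xx m (n mod r) (1 + n div r)"
      unfolding xx_def by (rule thr_ge[symmetric]) (use kJ in simp)
    finally show ?thesis .
  qed
qed

definition Yone :: "nat \<Rightarrow> bool" where
  "Yone n \<longleftrightarrow> (n div r) mod p (n mod r) = (k - 1) mod p (n mod r)"

lemma yy_closed: "yy m n = (if Yone n then 1 else 0)"
proof -
  have c: "n mod r < r" using r_pos by simp
  show ?thesis unfolding yy_xx xx_closed[OF c] Yone_def using modk[OF k_pos] by simp
qed

end



lemma psq: "r \<ge> 2 \<Longrightarrow> 1 \<le> q \<Longrightarrow> (\<Sum>l\<in>{1..2*r}. wt r l * (if q < l then 1 else 0)) \<le> 2 * real r - 2"
proof -
  assume r: "r \<ge> 2" and q: "1 \<le> q"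
  have "(\<Sum>l\<in>{1..2*r}. wt r l * (if q < l then 1 else 0)) = (\<Sum>l\<in>{1..2*r}. wt r l) - (\<Sum>l\<in>{1..2*r}. if l \<le> q then wt r l else 0)"
    unfolding sum_subtractf[symmetric] by (rule sum.cong) auto
  also have "(\<Sum>l\<in>{1..2*r}. if l \<le> q then wt r l else 0) = (\<Sum>l\<in>{l\<in>{1..2*r}. l \<le> q}. wt r l)"
    by (rule sum.inter_filter[symmetric]) simp
  also have "{l\<in>{1..2*r}. l \<le> q} = {1..min q (2*r)}" by auto
  finally have e: "(\<Sum>l\<in>{1..2*r}. wt r l * (if q < l then 1 else 0)) = 2 * real r - (\<Sum>l\<in>{1..min q (2*r)}. wt r l)"
    using ps_total[OF r] by simp
  have "(\<Sum>l\<in>{1..min q (2*r)}. wt r l) \<ge> 2" using ps_ge2[OF r] q r by simp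
  then show ?thesis using e by simp
qed

locale T = S +
  fixes d :: nat
  assumes dr: "d < rho m"
begin

definition Lam where "Lam = Lcm (p ` {0..d})"
definition K0 where "K0 = k - 1 + Lam"
definition n0 where "n0 = r * K0"
definition Z where "Z n = (if n mod r \<le> d \<and> n0 \<le> n then 0 else yy m n)"

lemma Lam_pos: "Lam > 0"
proof -
  have "0 \<notin> p ` {0..d}"
  proof
    assume "0 \<in> p ` {0..d}"
    then obtain x where "x \<le> d" "p x = 0" by auto
    with p_pos[of x] dr show False by simp
  qed
  moreover have "finite (p ` {0..d})" by simp
  ultimately show ?thesis unfolding Lam_def by (simp del: Lcm_0_iff_nat add: Lcm_0_iff_nat[symmetric] gr0I)
qed

lemma p_dvd_Lam: "c \<le> d \<Longrightarrow> p c dvd Lam" unfolding Lam_def by (rule dvd_Lcm) simp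

lemma L1_eq: "L1 m d = r * Lam" by (simp add: L1_def Lam_def)

lemma n0_eq: "hh m + L1 m d - rho m = n0"
  using k_pos Lam_pos by (simp add: L1_eq n0_def K0_def h_def' algebra_simps diff_mult_distrib2)

lemma h_le_n0: "h \<le> n0"
proof -
  have "k \<le> k - 1 + Lam" using k_pos Lam_pos by simp
  then show ?thesis unfolding n0_def K0_def h_def' by (rule mult_le_mono2)
qed

lemma Z01: "Z n = 0 \<or> Z n = 1" unfolding Z_def yy_closed by auto

lemma Z_Yone: "Z n = 1 \<Longrightarrow> Yone n" unfolding Z_def yy_closed by (auto split: if_splits)

lemma K0_mod: "c \<le> d \<Longrightarrow> K0 mod p c = (k - 1) mod p c"
  using p_dvd_Lam unfolding K0_def by (metis mod_add_right_eq dvd_imp_mod_0 add_0_right)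

lemma div_mod_pos: "(r * t + c) div r = t + c div r" "(r * t + c) mod r = c mod r"
  using r_pos by simp_all

lemma SZ:
  assumes N: "h \<le> N"
  defines "SS \<equiv> (\<Sum>f\<in>{1..h}. bb m f * Z (N - f))"
  shows "(Z N = 1 \<longrightarrow> SS = 2 * real r) \<and> ((N mod r \<le> d \<and> N div r = K0) \<longrightarrow> SS = 2 * real r)
      \<and> ((Z N = 0 \<and> \<not> (N mod r \<le> d \<and> N div r = K0)) \<longrightarrow> SS \<le> 2 * real r - 2)"
proof -
  define c where "c = N mod r"
  define J where "J = N div r"
  have c: "c < r" using r_pos unfolding c_def by simp
  have NJ: "N = r * J + c" unfolding c_def J_def by simp
  have kJ: "k \<le> J" using h_ge[OF N] unfolding J_def .
  define u where "u t = Z (r * t + c)" for t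
  define s where "s = (k - 1) mod p c"
  have "SS = (\<Sum>j\<in>{1..k}. abar m j * Z (N - r * j))" unfolding SS_def by (rule bsum)
  also have "\<dots> = (\<Sum>j\<in>{1..k}. abar m j * u (J - j))"
  proof (rule sum.cong[OF refl])
    fix j assume j: "j \<in> {1..k}"
    have "N - r * j = r * (J - j) + c" using NJ j kJ by (simp add: diff_mult_distrib2)
    then show "abar m j * Z (N - r * j) = abar m j * u (J - j)" unfolding u_def by simp
  qed
  finally have Se: "SS = (\<Sum>j\<in>{1..k}. abar m j * u (J - j))" .
  have u01: "\<forall>t. u t = 0 \<or> u t = 1" unfolding u_def using Z01 by blast
  have us: "\<forall>t. u t = 1 \<longrightarrow> t mod p c = s"
  proof (intro allI impI)
    fix t assume "u t = 1"
    then have "Yone (r * t + c)" unfolding u_def by (rule Z_Yone)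
    then show "t mod p c = s" unfolding Yone_def s_def using c r_pos by simp
  qed
  have ZN1: "Z N = 1 \<Longrightarrow> J mod p c = s" using Z_Yone[of N] unfolding Yone_def s_def c_def J_def by simp
  show ?thesis
  proof (cases "J mod p c = s")
    case False
    have "SS \<le> 2 * (real r - 1)" unfolding Se by (rule WL1[OF c kJ u01 us False])
    moreover have "\<not> (c \<le> d \<and> J = K0)" using K0_mod False unfolding s_def by auto
    ultimately show ?thesis using ZN1 False unfolding c_def J_def by auto
  next
    case True
    note JS = True
    have S2: "SS = (\<Sum>l\<in>{1..2*r}. wt r l * u (J - l * p c))" unfolding Se by (rule WL2[OF c kJ us u01 True])
    have lpc: "l * p c \<le> J" if "l \<le> 2*r" for l using lp_le_T[OF c that kJ] .
    have modJ: "(J - l * p c) mod p c = J mod p c" if "l \<le> 2*r" for l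
      using modd1[OF lpc[OF that]] by simp
    show ?thesis
    proof (cases "d < c \<or> J < K0")
      case True
      have "u (J - l * p c) = 1" if l: "l \<in> {1..2*r}" for l
      proof -
        have nz: "\<not> (c \<le> d \<and> n0 \<le> r * (J - l * p c) + c)"
        proof
          assume a: "c \<le> d \<and> n0 \<le> r * (J - l * p c) + c"
          then have "J < K0" using True by simp
          then have "J - l * p c + 1 \<le> K0" by simp
          then have "r * (J - l * p c + 1) \<le> r * K0" by (rule mult_le_mono2)
          then show False using a c unfolding n0_def by (simp add: algebra_simps)
        qed
        have "Yone (r * (J - l * p c) + c)" unfolding Yone_def using c r_pos modJ[of l] l JS
          by (simp add: s_def)
        then show ?thesis using nz c unfolding u_def Z_def yy_closed by simp
      qed
      then have "SS = (\<Sum>l\<in>{1..2*r}. wt r l)" unfolding S2 by (intro sum.cong) auto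
      also have "\<dots> = 2 * real r" using ps_total r2 by simp
      finally have "SS = 2 * real r" .
      moreover have "Z N = 1"
      proof -
        have "\<not> (c \<le> d \<and> n0 \<le> N)"
        proof
          assume a: "c \<le> d \<and> n0 \<le> N"
          then have "J < K0" using True by simp
          then have "J + 1 \<le> K0" by simp
          then have "r * (J + 1) \<le> r * K0" by (rule mult_le_mono2)
          then show False using a c NJ unfolding n0_def by (simp add: algebra_simps)
        qed
        moreover have "Yone N" unfolding Yone_def using \<open>J mod p c = s\<close> unfolding s_def c_def J_def by simp
        ultimately show ?thesis unfolding Z_def yy_closed c_def by simp
      qed
      ultimately show ?thesis by simp
    next
      case False
      then have cd: "c \<le> d" and JK: "K0 \<le> J" by auto
      have ZN0: "Z N = 0"
      proof -
        have "r * K0 \<le> r * J" using JK by (rule mult_le_mono2)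
        then have "n0 \<le> N" using NJ unfolding n0_def by linarith
        then show ?thesis unfolding Z_def using cd unfolding c_def by simp
      qed
      have "p c dvd J - K0"
        using True K0_mod[OF cd] JK unfolding s_def by (metis mod_eq_dvd_iff_nat)
      then obtain q where q: "J - K0 = p c * q" by blast
      have uq: "u (J - l * p c) = (if q < l then 1 else 0)" if l: "l \<in> {1..2*r}" for l
      proof (cases "q < l")
        case ql: True
        have "J - l * p c < K0"
        proof -
          have "q * p c + p c \<le> l * p c" using ql mult_le_mono1[of "Suc q" l "p c"] by simp
          moreover have "K0 > 0" using k_pos Lam_pos unfolding K0_def by simp
          moreover have "p c * q = q * p c" by (rule mult.commute)
          ultimately show ?thesis using q JK p_pos[OF c] by linarith
        qed
        then have "J - l * p c + 1 \<le> K0" by simp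
        then have "r * (J - l * p c + 1) \<le> r * K0" by (rule mult_le_mono2)
        then have "r * (J - l * p c) + c < n0" using c unfolding n0_def by (simp add: algebra_simps)
        moreover have "Yone (r * (J - l * p c) + c)" unfolding Yone_def using c r_pos modJ[of l] l JS
          by (simp add: s_def)
        ultimately show ?thesis using ql unfolding u_def Z_def yy_closed by simp
      next
        case ql: False
        have "l * p c \<le> q * p c" using ql by (simp add: mult_le_mono1)
        moreover have "p c * q = q * p c" by (rule mult.commute)
        ultimately have "K0 \<le> J - l * p c" using q JK by linarith
        then have "r * K0 \<le> r * (J - l * p c)" by (rule mult_le_mono2)
        then have "n0 \<le> r * (J - l * p c) + c" unfolding n0_def by linarith
        then show ?thesis using ql cd c unfolding u_def Z_def by simp
      qed
      have S3: "SS = (\<Sum>l\<in>{1..2*r}. wt r l * (if q < l then 1 else 0))"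
        unfolding S2 by (rule sum.cong[OF refl]) (simp only: uq)
      show ?thesis
      proof (cases "q = 0")
        case True
        then have "J = K0" using q JK by simp
        moreover have "SS = 2 * real r"
        proof -
          have "SS = (\<Sum>l\<in>{1..2*r}. wt r l)" unfolding S3 using True by (intro sum.cong) auto
          then show ?thesis using ps_total r2 by simp
        qed
        ultimately show ?thesis using ZN0 cd unfolding c_def J_def by simp
      next
        case False
        then have "J \<noteq> K0" using q p_pos[OF c] by auto
        moreover have "SS \<le> 2 * real r - 2" unfolding S3 using psq r2 False by simp
        ultimately show ?thesis using ZN0 unfolding c_def J_def by simp
      qed
    qed
  qed
qed

end



declare thr.simps[simp del]
lemma divk: "0 < (r::nat) \<Longrightarrow> 1 \<le> k \<Longrightarrow> (r*k - 1) div r = k - 1"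
proof -
  assume r: "0 < r" and k: "1 \<le> k"
  obtain k' where k': "k = Suc k'" using k by (cases k) auto
  have e: "r * k - 1 = (r - 1) + k' * r" using r k' by (simp add: algebra_simps)
  have "((r - 1) + k' * r) div r = k' + (r - 1) div r" using r by (simp only: div_mult_self1 neq0_conv)
  then show ?thesis using k' r e by simp
qed

lemma inj_aux: "(a::nat) \<le> x \<Longrightarrow> a \<le> y \<Longrightarrow> x mod q = y mod q \<Longrightarrow> (x - a) div q = (y - a) div q \<Longrightarrow> x = y"
proof -
  assume a: "a \<le> x" "a \<le> y" and m: "x mod q = y mod q" and d: "(x - a) div q = (y - a) div q"
  have "(a + (x - a)) mod q = (a + (y - a)) mod q" using a m by simp
  then have "(x - a) mod q = (y - a) mod q" by (simp add: nat_mod_eq_iff)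
  then have "x - a = y - a" using d by (metis div_mult_mod_eq)
  then show "x = y" using a by simp
qed

lemma off_ex: "(q::nat) > 0 \<Longrightarrow> s < q \<Longrightarrow> \<exists>off<q. (a + off) mod q = s"
proof -
  assume q: "q > 0" and s: "s < q"
  define off where "off = (s + (q - a mod q)) mod q"
  have "off < q" using q unfolding off_def by simp
  moreover have "(a + off) mod q = s"
  proof -
    have "(a + off) mod q = (a mod q + (s + (q - a mod q))) mod q" unfolding off_def
      by (metis mod_add_eq mod_mod_trivial)
    also have "a mod q + (s + (q - a mod q)) = s + q" using q
      by (metis add.commute add.left_commute le_add_diff_inverse less_imp_le_nat mod_less_divisor)
    finally show ?thesis using s by simp
  qed
  ultimately show ?thesis by blast
qed

lemma L_up:
  fixes S :: "nat set"
  assumes sub: "S \<subseteq> {a..<a+L}" and q: "q > 0" and md: "\<forall>x\<in>S. x mod q = s"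
  shows "card S \<le> (L - 1) div q + 1"
proof (cases "L = 0")
  case True then have "S = {}" using sub by auto
  then show ?thesis by simp
next
  case False
  have inj: "inj_on (\<lambda>x. (x - a) div q) S"
  proof (rule inj_onI)
    fix x y assume x: "x \<in> S" and y: "y \<in> S" and e: "(x - a) div q = (y - a) div q"
    have xa: "a \<le> x" "a \<le> y" using x y sub by auto
    have "x mod q = y mod q" using md x y by simp
    then show "x = y" using inj_aux[OF xa _ e] by simp
  qed
  have "(\<lambda>x. (x - a) div q) ` S \<subseteq> {..(L - 1) div q}"
  proof
    fix z assume "z \<in> (\<lambda>x. (x - a) div q) ` S"
    then obtain x where x: "x \<in> S" "z = (x - a) div q" by auto
    have "x \<in> {a..<a+L}" using x sub by auto
    then have "x - a \<le> L - 1" by auto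
    then show "z \<in> {..(L - 1) div q}" using x by (simp add: div_le_mono)
  qed
  then have "card S \<le> card {..(L - 1) div q}"
    using card_inj_on_le[OF inj] by blast
  then show ?thesis by simp
qed

lemma L_low:
  fixes a L q s :: nat
  assumes q: "q > 0" and s: "s < q"
  shows "L div q \<le> card {x \<in> {a..<a+L}. x mod q = s}"
proof -
  obtain off where off: "off < q" "(a + off) mod q = s" using off_ex[OF q s] by blast
  define g where "g i = a + off + i * q" for i
  have inj: "inj_on g {..< L div q}" unfolding g_def using q by (simp add: inj_on_def)
  have "g ` {..< L div q} \<subseteq> {x \<in> {a..<a+L}. x mod q = s}"
  proof
    fix x assume "x \<in> g ` {..< L div q}"
    then obtain i where i: "i < L div q" "x = g i" by auto
    have "Suc i \<le> L div q" using i by simp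
    then have "Suc i * q \<le> L div q * q" by (rule mult_le_mono1)
    also have "\<dots> \<le> L" by simp
    finally have "off + i * q < L" using off by simp
    moreover have "x mod q = s" using i off unfolding g_def by simp
    ultimately show "x \<in> {x \<in> {a..<a+L}. x mod q = s}" using i unfolding g_def by simp
  qed
  then have "card (g ` {..< L div q}) \<le> card {x \<in> {a..<a+L}. x mod q = s}"
    by (intro card_mono) auto
  then show ?thesis using card_image[OF inj] by simp
qed

context T begin

lemma yy_per: "n mod r \<le> d \<Longrightarrow> yy m (n + r * Lam) = yy m n"
proof -
  assume c: "n mod r \<le> d"
  have "p (n mod r) dvd Lam" using p_dvd_Lam[OF c] .
  then have "(n div r + Lam) mod p (n mod r) = (n div r) mod p (n mod r)"
    by (metis mod_add_right_eq dvd_imp_mod_0 add_0_right)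
  then show ?thesis unfolding yy_closed Yone_def using r_pos by (simp add: ac_simps)
qed

lemma k_ge2: "k \<ge> 2" using rp_le[OF r_pos] r2 by linarith

lemma ww_Z: "ww m d n = Z (n + L1 m d)"
proof (induction n rule: less_induct)
  case (less n)
  define i where "i = n mod r"
  define j where "j = n div r"
  have L1e: "L1 m d = r * Lam" by (rule L1_eq)
  have nij: "n = r * j + i" unfolding i_def j_def by simp
  have ir: "i < r" using r_pos unfolding i_def by simp
  have md: "(n + r * Lam) mod r = i" "(n + r * Lam) div r = j + Lam"
    unfolding i_def j_def using r_pos by simp_all
  show ?case
  proof (cases "n < h")
    case True
    have jk: "j < k" using True r_pos unfolding j_def h_def' by (simp add: div_less_iff_less_mult mult.commute)
    have w0: "ww m d n = (if i \<le> d then (if j \<le> k - 2 then xx m i (1 + j) else 1 - xx m i k) else yy m (n + L1 m d))"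
      unfolding ww_def thr_lt[OF True] Let_def i_def j_def ..
    show ?thesis
    proof (cases "i \<le> d")
      case id: True
      show ?thesis
      proof (cases "j \<le> k - 2")
        case True
        have "j + Lam < K0" using True k_ge2 jk unfolding K0_def by linarith
        then have "j + Lam + 1 \<le> K0" by simp
        then have "r * (j + Lam + 1) \<le> r * K0" by (rule mult_le_mono2)
        then have lt: "n + r * Lam < n0" using nij ir unfolding n0_def by (simp add: algebra_simps)
        have "Z (n + L1 m d) = yy m (n + r * Lam)" unfolding Z_def L1e using lt by simp
        also have "\<dots> = yy m n" using yy_per id unfolding i_def by simp
        also have "\<dots> = xx m i (1 + j)" unfolding yy_xx i_def j_def ..
        finally show ?thesis using w0 id True by simp
      next
        case False
        then have "j = k - 1" using jk by simp
        moreover have "n0 = r * (k - 1) + r * Lam" unfolding n0_def K0_def by (simp add: distrib_left)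
        ultimately have "n + r * Lam = n0 + i" using nij by simp
        then have "Z (n + L1 m d) = 0" unfolding Z_def L1e using md id by simp
        moreover have "xx m i k = 1" using xx_closed[OF ir] by simp
        ultimately show ?thesis using w0 id False by simp
      qed
    next
      case False
      then show ?thesis using w0 md unfolding Z_def L1e by simp
    qed
  next
    case False
    then have N: "h \<le> n" by simp
    have "ww m d n = step ((\<Sum>f\<in>{1..h}. bb m f * ww m d (n - f)) - thetabar m)"
      unfolding ww_def by (rule thr_ge[OF N])
    also have "(\<Sum>f\<in>{1..h}. bb m f * ww m d (n - f)) = (\<Sum>f\<in>{1..h}. bb m f * Z ((n + L1 m d) - f))"
    proof (rule sum.cong[OF refl])
      fix f assume f: "f \<in> {1..h}"
      then have "n - f < n" "f \<le> n" using N by auto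
      then have "ww m d (n - f) = Z (n - f + L1 m d)" using less.IH by simp
      also have "n - f + L1 m d = (n + L1 m d) - f" using \<open>f \<le> n\<close> by simp
      finally show "bb m f * ww m d (n - f) = bb m f * Z ((n + L1 m d) - f)" by simp
    qed
    finally have e: "ww m d n = step ((\<Sum>f\<in>{1..h}. bb m f * Z ((n + L1 m d) - f)) - thetabar m)" .
    have N2: "h \<le> n + L1 m d" using N by simp
    have nf: "\<not> ((n + L1 m d) mod r \<le> d \<and> (n + L1 m d) div r = K0)"
    proof -
      have "k \<le> j" using h_ge[OF N] unfolding j_def .
      then have "K0 < j + Lam" using k_pos unfolding K0_def by simp
      then show ?thesis using md unfolding L1e by simp
    qed
    note sz = SZ[OF N2]
    show ?thesis
    proof (cases "Z (n + L1 m d) = 1")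
      case True
      then show ?thesis using e sz by (simp add: step_def thetabar_def)
    next
      case False
      then have "Z (n + L1 m d) = 0" using Z01 by blast
      then show ?thesis using e sz nf by (simp add: step_def thetabar_def)
    qed
  qed
qed

definition FF where "FF N = {f \<in> {1..h}. f \<in> AA m d \<and> Z (N - f) = 1}"
definition Fc where "Fc N c = {f \<in> FF N. (N - f) mod r = c}"
definition Oc where "Oc c = {g \<in> B0 m d. (n0 - g) mod r = c}"
definition Xl where "Xl N c l = {f \<in> Fc N c. \<exists>g\<in>B0 m d. f = l + g}"

lemma B0_eq: "B0 m d = {g. 1 \<le> g \<and> g \<le> h - d \<and> Yone (n0 - g)}"
  unfolding B0_def n0_eq yy_closed by auto

lemma B0_fin: "finite (B0 m d)" unfolding B0_eq by (rule finite_subset[of _ "{..h}"]) auto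

lemma AA_iff: "f \<in> AA m d \<longleftrightarrow> (\<exists>l\<le>d. \<exists>g\<in>B0 m d. f = l + g)"
  unfolding AA_def Bl_def by auto

lemma FF_fin: "finite (FF N)" unfolding FF_def by simp

lemma Ypos: "Yone R \<Longrightarrow> R mod (r * p (R mod r)) = r * ((k - 1) mod p (R mod r)) + R mod r"
  unfolding Yone_def by (simp add: mod_mult2_eq)

lemma posdvd: "Yone P1 \<Longrightarrow> Yone P2 \<Longrightarrow> P1 mod r = P2 mod r \<Longrightarrow> int (r * p (P1 mod r)) dvd int P1 - int P2"
  unfolding Yone_def by (intro posc) auto

lemma rep_mod:
  assumes c: "c < r" and e: "Q mod (r * p c) = r * ((k - 1) mod p c) + c"
  shows "Q mod r = c \<and> Yone Q"
proof -
  have e2: "r * (Q div r mod p c) + Q mod r = r * ((k - 1) mod p c) + c" using e by (simp add: mod_mult2_eq)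
  have "(r * (Q div r mod p c) + Q mod r) mod r = (r * ((k - 1) mod p c) + c) mod r" using e2 by simp
  then have qc: "Q mod r = c" using c by simp
  then have "Q div r mod p c = (k - 1) mod p c" using e2 r_pos by simp
  then show ?thesis using qc unfolding Yone_def by simp
qed

lemma res_lt: "c < r \<Longrightarrow> r * ((k - 1) mod p c) + c < r * p c"
proof -
  assume c: "c < r"
  have "(k - 1) mod p c < p c" using p_pos[OF c] by simp
  then have "(k - 1) mod p c + 1 \<le> p c" by simp
  then have "r * ((k - 1) mod p c + 1) \<le> r * p c" by (rule mult_le_mono2)
  then show ?thesis using c by (simp add: algebra_simps)
qed

lemma Oc_lower: "c < r \<Longrightarrow> (k - 1) div p c \<le> card (Oc c)"
proof -
  assume c: "c < r"
  define s where "s = r * ((k - 1) mod p c) + c"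
  define a where "a = n0 - (h - d)"
  define Pc where "Pc = {Q \<in> {a..<a + (h - d)}. Q mod (r * p c) = s}"
  have q: "r * p c > 0" using r_pos p_pos[OF c] by simp
  have low: "(h - d) div (r * p c) \<le> card Pc" unfolding Pc_def by (rule L_low[OF q]) (use res_lt[OF c] in \<open>simp add: s_def\<close>)
  have an: "a + (h - d) = n0" unfolding a_def using h_le_n0 by simp
  have inj: "inj_on (\<lambda>Q. n0 - Q) Pc" unfolding Pc_def using an by (auto simp: inj_on_def)
  have "(\<lambda>Q. n0 - Q) ` Pc \<subseteq> Oc c"
  proof
    fix g assume "g \<in> (\<lambda>Q. n0 - Q) ` Pc"
    then obtain Q where Q: "Q \<in> Pc" "g = n0 - Q" by auto
    have Qr: "a \<le> Q" "Q < n0" using Q(1) an unfolding Pc_def by auto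
    have rm: "Q mod r = c \<and> Yone Q" using rep_mod[OF c] Q(1) unfolding Pc_def s_def by simp
    have "n0 - g = Q" using Q(2) Qr by simp
    moreover have "1 \<le> g" "g \<le> h - d" using Q(2) Qr an by auto
    ultimately show "g \<in> Oc c" unfolding Oc_def B0_eq using rm by simp
  qed
  moreover have "finite (Oc c)" unfolding Oc_def using B0_fin by simp
  ultimately have "card Pc \<le> card (Oc c)" by (rule card_inj_on_le[OF inj])
  moreover have "(k - 1) div p c \<le> (h - d) div (r * p c)"
  proof -
    have "r * (k - 1) = r * k - r" by (simp add: diff_mult_distrib2)
    moreover have "r \<le> r * k" using k_pos by simp
    ultimately have "r * (k - 1) \<le> h - d" using dr unfolding h_def' by linarith
    then have "r * (k - 1) div (r * p c) \<le> (h - d) div (r * p c)" by (rule div_le_mono)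
    then show ?thesis using r_pos by simp
  qed
  ultimately show ?thesis using low by linarith
qed

lemma Fc_upper: "h \<le> N \<Longrightarrow> c < r \<Longrightarrow> card (Fc N c) \<le> (k - 1) div p c + 1"
proof -
  assume N: "h \<le> N" and c: "c < r"
  define s where "s = r * ((k - 1) mod p c) + c"
  have q: "r * p c > 0" using r_pos p_pos[OF c] by simp
  have Fh: "1 \<le> f \<and> f \<le> h" if "f \<in> Fc N c" for f using that unfolding Fc_def FF_def by simp
  have inj: "inj_on (\<lambda>f. N - f) (Fc N c)"
  proof (rule inj_onI)
    fix f f' assume "f \<in> Fc N c" "f' \<in> Fc N c" "N - f = N - f'"
    then show "f = f'" using Fh N by (metis diff_diff_cancel le_trans)
  qed
  have sub: "(\<lambda>f. N - f) ` (Fc N c) \<subseteq> {N - h..<N - h + h}"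
  proof
    fix x assume "x \<in> (\<lambda>f. N - f) ` (Fc N c)"
    then obtain f where "f \<in> Fc N c" "x = N - f" by auto
    then show "x \<in> {N - h..<N - h + h}" using Fh[of f] N by auto
  qed
  have md: "\<forall>x\<in>(\<lambda>f. N - f) ` (Fc N c). x mod (r * p c) = s"
  proof
    fix x assume "x \<in> (\<lambda>f. N - f) ` (Fc N c)"
    then obtain f where f: "f \<in> Fc N c" "x = N - f" by auto
    then have "Z x = 1" "x mod r = c" unfolding Fc_def FF_def by auto
    then show "x mod (r * p c) = s" using Ypos[of x] Z_Yone unfolding s_def by auto
  qed
  have "card ((\<lambda>f. N - f) ` (Fc N c)) \<le> (h - 1) div (r * p c) + 1" by (rule L_up[OF sub q md])
  moreover have "(h - 1) div (r * p c) = (k - 1) div p c"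
    using divk[OF r_pos k_pos] unfolding h_def' by (simp add: div_mult2_eq)
  ultimately show ?thesis using card_image[OF inj] by simp
qed

end


context T begin

lemma Xl_props: "f \<in> Xl N c l \<Longrightarrow> \<exists>g. g \<in> B0 m d \<and> f = l + g \<and> 1 \<le> f \<and> f \<le> h \<and> Z (N - f) = 1 \<and> (N - f) mod r = c"
  unfolding Xl_def Fc_def FF_def by auto

lemma B0_props: "g \<in> B0 m d \<Longrightarrow> 1 \<le> g \<and> g \<le> h - d \<and> Yone (n0 - g) \<and> g \<le> n0"
  unfolding B0_eq using h_le_n0 by auto

lemma Xl_fin: "finite (Xl N c l)"
  by (rule finite_subset[OF _ FF_fin[of N]]) (auto simp: Xl_def Fc_def)

lemma int_mod_eq: "int r dvd int a - int b \<Longrightarrow> a mod r = b mod r"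
  by (metis mod_eq_dvd_iff of_nat_eq_iff zmod_int)

lemma X_le1:
  assumes N: "h \<le> N" and c: "c < r" and l: "l \<le> d" and le: "l \<noteq> N mod r"
  shows "card (Xl N c l) \<le> 1"
proof -
  have "\<forall>f1\<in>Xl N c l. \<forall>f2\<in>Xl N c l. f1 = f2"
  proof (intro ballI)
    fix f1 f2 assume f1: "f1 \<in> Xl N c l" and f2: "f2 \<in> Xl N c l"
    obtain g1 where g1: "g1 \<in> B0 m d" "f1 = l + g1" "1 \<le> f1" "f1 \<le> h" "Z (N - f1) = 1" "(N - f1) mod r = c"
      using Xl_props[OF f1] by blast
    obtain g2 where g2: "g2 \<in> B0 m d" "f2 = l + g2" "1 \<le> f2" "f2 \<le> h" "Z (N - f2) = 1" "(N - f2) mod r = c"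
      using Xl_props[OF f2] by blast
    note b1 = B0_props[OF g1(1)] and b2 = B0_props[OF g2(1)]
    define P1 where "P1 = N - f1"
    define P2 where "P2 = N - f2"
    define Q1 where "Q1 = n0 - g1"
    define Q2 where "Q2 = n0 - g2"
    have iP1: "int P1 = int N - int f1" unfolding P1_def using g1 N by simp
    have iP2: "int P2 = int N - int f2" unfolding P2_def using g2 N by simp
    have iQ1: "int Q1 = int n0 - int g1" unfolding Q1_def using b1 by simp
    have iQ2: "int Q2 = int n0 - int g2" unfolding Q2_def using b2 by simp
    have YP: "Yone P1" "Yone P2" unfolding P1_def P2_def using g1(5) g2(5) Z_Yone by auto
    have YQ: "Yone Q1" "Yone Q2" unfolding Q1_def Q2_def using b1 b2 by auto
    have Pc: "P1 mod r = c" "P2 mod r = c" unfolding P1_def P2_def using g1 g2 by auto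
    define x where "x = int f2 - int f1"
    have xP: "x = int P1 - int P2" unfolding x_def using iP1 iP2 by simp
    have xQ: "x = int Q1 - int Q2" unfolding x_def using iQ1 iQ2 g1(2) g2(2) by simp
    have d1: "int (r * p c) dvd x" unfolding xP using posdvd[OF YP] Pc by simp
    then have "int r dvd x" by (metis dvd_mult_left of_nat_mult)
    then have Qm: "Q1 mod r = Q2 mod r" using xQ int_mod_eq by simp
    define c' where "c' = Q1 mod r"
    have c': "c' < r" unfolding c'_def using r_pos by simp
    have d2: "int (r * p c') dvd x" unfolding xQ c'_def using posdvd[OF YQ Qm] .
    have cc: "c' \<noteq> c"
    proof
      assume "c' = c"
      then have "Q1 mod r = P1 mod r" using Pc unfolding c'_def by simp
      then have "int r dvd int Q1 - int P1" by (metis mod_eq_dvd_iff of_nat_mod)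
      moreover have "int Q1 - int P1 = int r * (int K0 - int (N div r)) + (int l - int (N mod r))"
      proof -
        have "int N = int r * int (N div r) + int (N mod r)" by (metis of_nat_add of_nat_mult div_mult_mod_eq mult.commute)
        moreover have "int n0 = int r * int K0" unfolding n0_def by simp
        ultimately show ?thesis using iQ1 iP1 g1(2) by (simp add: algebra_simps)
      qed
      ultimately have "int r dvd int l - int (N mod r)" by (metis dvd_add_right_iff dvd_triv_left)
      moreover have "\<bar>int l - int (N mod r)\<bar> < int r"
      proof -
        have "N mod r < r" using r_pos by simp
        then show ?thesis using l dr by linarith
      qed
      ultimately have "int l - int (N mod r) = 0"
      proof -
        assume dv: "int r dvd int l - int (N mod r)" and lt: "\<bar>int l - int (N mod r)\<bar> < int r"
        show ?thesis
        proof (rule ccontr)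
          assume ne: "int l - int (N mod r) \<noteq> 0"
          from dvd_imp_le_int[OF ne dv] lt show False by simp
        qed
      qed
      then show False using le by simp
    qed
    obtain y where y: "x = int r * int (p c) * y" using d1 by (auto simp: dvd_def)
    have "int r * int (p c') dvd int r * (int (p c) * y)" using d2 y by (simp add: mult.assoc)
    then have "int (p c') dvd int (p c) * y" using r_pos by simp
    moreover have "coprime (int (p c')) (int (p c))" using p_coprime[OF c' c cc] by simp
    ultimately have "int (p c') dvd y" using coprime_dvd_mult_right_iff by blast
    then obtain z where z: "y = int (p c') * z" by (auto simp: dvd_def)
    have xz: "x = int (r * p c * p c') * z" using y z by (simp add: algebra_simps)
    have hb: "h \<le> r * p c * p c'" using k_le_pp[OF c c'] unfolding h_def' by (simp add: mult.assoc)
    have "\<bar>x\<bar> < int h" unfolding x_def using g1 g2 by auto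
    then have "z = 0"
    proof -
      assume ax: "\<bar>x\<bar> < int h"
      show "z = 0"
      proof (rule ccontr)
        assume "z \<noteq> 0"
        then have "\<bar>z\<bar> \<ge> 1" by simp
        then have "int (r * p c * p c') * 1 \<le> int (r * p c * p c') * \<bar>z\<bar>" by (intro mult_left_mono) auto
        then have "int (r * p c * p c') \<le> \<bar>x\<bar>" unfolding xz by (simp add: abs_mult)
        then show False using ax hb by linarith
      qed
    qed
    then show "f1 = f2" using xz unfolding x_def by simp
  qed
  then show ?thesis using card_le_Suc0_iff_eq[OF Xl_fin] by simp
qed

lemma Main_empty:
  assumes N: "h \<le> N" and c: "c < r"
    and nd: "\<not> int (p c) dvd (int (N div r) - int K0)"
  shows "Xl N c (N mod r) = {}"
proof (rule ccontr)
  assume "Xl N c (N mod r) \<noteq> {}"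
  then obtain f where f: "f \<in> Xl N c (N mod r)" by blast
  obtain g where g: "g \<in> B0 m d" "f = N mod r + g" "1 \<le> f" "f \<le> h" "Z (N - f) = 1" "(N - f) mod r = c"
    using Xl_props[OF f] by blast
  note b = B0_props[OF g(1)]
  define P where "P = N - f"
  define Q where "Q = n0 - g"
  have iP: "int P = int N - int f" unfolding P_def using g N by simp
  have iQ: "int Q = int n0 - int g" unfolding Q_def using b by simp
  have "int N = int r * int (N div r) + int (N mod r)" by (metis of_nat_add of_nat_mult div_mult_mod_eq mult.commute)
  moreover have "int n0 = int r * int K0" unfolding n0_def by simp
  ultimately have PQ: "int P - int Q = int r * (int (N div r) - int K0)" using iP iQ g(2) by (simp add: algebra_simps)
  then have "int r dvd int P - int Q" by simp
  then have Qm: "P mod r = Q mod r" using int_mod_eq by simp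
  have YP: "Yone P" unfolding P_def using g(5) Z_Yone by auto
  have YQ: "Yone Q" unfolding Q_def using b by auto
  have Pc: "P mod r = c" unfolding P_def using g by simp
  have "int (r * p c) dvd int P - int Q" using posdvd[OF YP YQ Qm] Pc by simp
  then have "int r * int (p c) dvd int r * (int (N div r) - int K0)" using PQ by simp
  then have "int (p c) dvd int (N div r) - int K0" using r_pos by simp
  then show False using nd by simp
qed

lemma Fc_sub: "Fc N c \<subseteq> (\<Union>l\<in>{0..d}. Xl N c l)"
proof
  fix f assume f: "f \<in> Fc N c"
  then have "f \<in> AA m d" unfolding Fc_def FF_def by simp
  then obtain l g where "l \<le> d" "g \<in> B0 m d" "f = l + g" using AA_iff by blast
  then show "f \<in> (\<Union>l\<in>{0..d}. Xl N c l)" using f unfolding Xl_def by auto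
qed

lemma flip_cnt:
  assumes fl: "N mod r \<le> d" "N div r = K0"
  shows "card (B0 m d) \<le> card (FF N)"
proof -
  define i where "i = N mod r"
  have Ni: "N = n0 + i" unfolding i_def n0_def using fl by (metis div_mult_mod_eq mult.commute)
  have inj: "inj_on (\<lambda>g. g + i) (B0 m d)" by (simp add: inj_on_def)
  have "(\<lambda>g. g + i) ` (B0 m d) \<subseteq> FF N"
  proof
    fix f assume "f \<in> (\<lambda>g. g + i) ` (B0 m d)"
    then obtain g where g: "g \<in> B0 m d" "f = g + i" by auto
    note b = B0_props[OF g(1)]
    have "i \<le> d" using fl unfolding i_def by simp
    then have f1: "1 \<le> f" "f \<le> h" using b g(2) by auto
    have fA: "f \<in> AA m d" using AA_iff g \<open>i \<le> d\<close> by (metis add.commute)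
    have "N - f = n0 - g" using Ni g(2) by simp
    moreover have "n0 - g < n0" using b by simp
    ultimately have "Z (N - f) = yy m (n0 - g)" unfolding Z_def by simp
    also have "\<dots> = 1" using b yy_closed by simp
    finally show "f \<in> FF N" unfolding FF_def using f1 fA by simp
  qed
  then show ?thesis using card_inj_on_le[OF inj _ FF_fin] by simp
qed

lemma card_FF: "card (FF N) = (\<Sum>c<r. card (Fc N c))"
proof -
  have "FF N = (\<Union>c\<in>{..<r}. Fc N c)" unfolding Fc_def using r_pos by auto
  moreover have "card (\<Union>c\<in>{..<r}. Fc N c) = (\<Sum>c<r. card (Fc N c))"
  proof (rule card_UN_disjoint)
    show "finite {..<r}" by simp
    show "\<forall>c\<in>{..<r}. finite (Fc N c)" unfolding Fc_def using FF_fin by simp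
    show "\<forall>i\<in>{..<r}. \<forall>j\<in>{..<r}. i \<noteq> j \<longrightarrow> Fc N i \<inter> Fc N j = {}" unfolding Fc_def by auto
  qed
  ultimately show ?thesis by simp
qed

lemma card_B0: "card (B0 m d) = (\<Sum>c<r. card (Oc c))"
proof -
  have "B0 m d = (\<Union>c\<in>{..<r}. Oc c)" unfolding Oc_def using r_pos by auto
  moreover have "card (\<Union>c\<in>{..<r}. Oc c) = (\<Sum>c<r. card (Oc c))"
  proof (rule card_UN_disjoint)
    show "finite {..<r}" by simp
    show "\<forall>c\<in>{..<r}. finite (Oc c)" unfolding Oc_def using B0_fin by simp
    show "\<forall>i\<in>{..<r}. \<forall>j\<in>{..<r}. i \<noteq> j \<longrightarrow> Oc i \<inter> Oc j = {}" unfolding Oc_def by auto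
  qed
  ultimately show ?thesis by simp
qed

lemma Oc_2r: "c < r \<Longrightarrow> 2 * r \<le> card (Oc c)"
proof -
  assume c: "c < r"
  have "2 * r * p c \<le> k - 1" using rp_le[OF c] r_pos by linarith
  then have "2 * r \<le> (k - 1) div p c" using p_pos[OF c] by (simp add: less_eq_div_iff_mult_less_eq)
  then show ?thesis using Oc_lower[OF c] by linarith
qed

lemma cnt_lt:
  assumes N: "h \<le> N" and ZN: "Z N = 1"
  shows "card (FF N) < card (B0 m d)"
proof -
  define e where "e = N mod r"
  have er: "e < r" unfolding e_def using r_pos by simp
  have B2: "r * (2 * r) \<le> card (B0 m d)"
  proof -
    have "(\<Sum>c<r. 2 * r) \<le> (\<Sum>c<r. card (Oc c))" by (rule sum_mono) (simp add: Oc_2r)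
    then show ?thesis unfolding card_B0 by simp
  qed
  show ?thesis
  proof (cases "d < e")
    case True
    have "card (Fc N c) \<le> d + 1" if c: "c < r" for c
    proof -
      have "card (Fc N c) \<le> card (\<Union>l\<in>{0..d}. Xl N c l)"
        by (rule card_mono) (auto intro: Fc_sub[THEN subsetD] simp: Xl_fin)
      also have "\<dots> \<le> (\<Sum>l\<in>{0..d}. card (Xl N c l))" by (rule card_UN_le) simp
      also have "\<dots> \<le> (\<Sum>l\<in>{0..d}. 1)"
      proof (rule sum_mono)
        fix l assume "l \<in> {0..d}"
        then show "card (Xl N c l) \<le> 1" using X_le1[OF N c] True unfolding e_def by simp
      qed
      finally show ?thesis by simp
    qed
    then have "card (FF N) \<le> (\<Sum>c<r. d + 1)" unfolding card_FF by (intro sum_mono) simp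
    also have "\<dots> = r * (d + 1)" by simp
    also have "\<dots> \<le> r * r" using dr by (intro mult_le_mono2) simp
    also have "\<dots> < r * (2 * r)" using r_pos by simp
    finally show ?thesis using B2 by linarith
  next
    case False
    then have ed: "e \<le> d" by simp
    show ?thesis
    proof (cases "\<exists>c0<r. \<not> int (p c0) dvd (int (N div r) - int K0)")
      case True
      then obtain c0 where c0: "c0 < r" "\<not> int (p c0) dvd (int (N div r) - int K0)" by blast
      have X0: "Xl N c0 e = {}" using Main_empty[OF N c0] unfolding e_def .
      have F0: "card (Fc N c0) \<le> d"
      proof -
        have "Fc N c0 \<subseteq> (\<Union>l\<in>{0..d} - {e}. Xl N c0 l)" using Fc_sub[of N c0] X0 by blast
        then have "card (Fc N c0) \<le> card (\<Union>l\<in>{0..d} - {e}. Xl N c0 l)"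
          by (rule card_mono[rotated]) (simp add: Xl_fin)
        also have "\<dots> \<le> (\<Sum>l\<in>{0..d} - {e}. card (Xl N c0 l))" by (rule card_UN_le) simp
        also have "\<dots> \<le> (\<Sum>l\<in>{0..d} - {e}. 1)"
        proof (rule sum_mono)
          fix l assume "l \<in> {0..d} - {e}"
          then show "card (Xl N c0 l) \<le> 1" using X_le1[OF N c0(1)] unfolding e_def by simp
        qed
        also have "\<dots> = d" using ed by simp
        finally show ?thesis .
      qed
      have Fo: "card (Fc N c) \<le> card (Oc c) + 1" if c: "c < r" for c
        using Fc_upper[OF N c] Oc_lower[OF c] by linarith
      have "card (FF N) = card (Fc N c0) + (\<Sum>c\<in>{..<r} - {c0}. card (Fc N c))"
        unfolding card_FF using c0 by (simp add: sum.remove)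
      also have "\<dots> \<le> d + (\<Sum>c\<in>{..<r} - {c0}. card (Oc c) + 1)"
        using F0 Fo by (intro add_mono sum_mono) auto
      also have "\<dots> = d + (r - 1) + (\<Sum>c\<in>{..<r} - {c0}. card (Oc c))"
      proof -
        have "(\<Sum>c\<in>{..<r} - {c0}. card (Oc c) + 1) = (\<Sum>c\<in>{..<r} - {c0}. card (Oc c)) + (\<Sum>c\<in>{..<r} - {c0}. 1)"
          by (rule sum.distrib)
        moreover have "(\<Sum>c\<in>{..<r} - {c0}. (1::nat)) = r - 1" using c0 by simp
        ultimately show ?thesis by simp
      qed
      also have "\<dots> < card (Oc c0) + (\<Sum>c\<in>{..<r} - {c0}. card (Oc c))"
        using Oc_2r[OF c0(1)] dr by linarith
      also have "\<dots> = card (B0 m d)" unfolding card_B0 using c0 by (simp add: sum.remove)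
      finally show ?thesis .
    next
      case False
      then have alld: "\<forall>c<r. int (p c) dvd (int (N div r) - int K0)" by blast
      have "\<not> n0 \<le> N" using ZN ed unfolding Z_def e_def by (auto split: if_splits)
      then have "N < r * K0" unfolding n0_def by simp
      then have lt: "N div r < K0" by (simp add: div_less_iff_less_mult mult.commute r_pos)
      define D' where "D' = K0 - N div r"
      have D'pos: "D' > 0" unfolding D'_def using lt by simp
      have "p c dvd D'" if c: "c \<in> {0..d}" for c
      proof -
        have "int (p c) dvd (int (N div r) - int K0)" using alld c dr by simp
        then have "int (p c) dvd - (int (N div r) - int K0)" by (simp only: dvd_minus_iff)
        moreover have "- (int (N div r) - int K0) = int D'" unfolding D'_def using lt by simp
        ultimately show ?thesis by simp
      qed
      then have "Lam dvd D'" unfolding Lam_def by (intro Lcm_least) auto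
      then have "Lam \<le> D'" using D'pos by (simp add: dvd_imp_le)
      then have "N div r \<le> k - 1" using lt k_pos unfolding D'_def K0_def by linarith
      then have "N div r < k" using k_pos by linarith
      then have "N < h" unfolding h_def' using r_pos by (simp add: div_less_iff_less_mult mult.commute)
      then show ?thesis using N by simp
    qed
  qed
qed

lemma Tot_pos: "Tot m d > 0"
proof -
  have "r * (2 * r) \<le> card (B0 m d)"
  proof -
    have "(\<Sum>c<r. 2 * r) \<le> (\<Sum>c<r. card (Oc c))" by (rule sum_mono) (simp add: Oc_2r)
    then show ?thesis unfolding card_B0 by simp
  qed
  moreover have "0 < r * (2 * r)" using r_pos by simp
  ultimately show ?thesis unfolding Tot_def by linarith
qed

lemma csum: "(\<Sum>f\<in>{1..h}. cc m lam f d * Z (N - f)) = (\<Sum>f\<in>{1..h}. bb m f * Z (N - f)) + betad m lam d * real (card (FF N))"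
proof -
  have "(\<Sum>f\<in>{1..h}. cc m lam f d * Z (N - f)) = (\<Sum>f\<in>{1..h}. bb m f * Z (N - f) + (if f \<in> AA m d \<and> Z (N - f) = 1 then betad m lam d else 0))"
  proof (rule sum.cong[OF refl])
    fix f
    show "cc m lam f d * Z (N - f) = bb m f * Z (N - f) + (if f \<in> AA m d \<and> Z (N - f) = 1 then betad m lam d else 0)"
      unfolding cc_def using Z01[of "N - f"] by (auto simp: algebra_simps)
  qed
  also have "\<dots> = (\<Sum>f\<in>{1..h}. bb m f * Z (N - f)) + (\<Sum>f\<in>{1..h}. if f \<in> AA m d \<and> Z (N - f) = 1 then betad m lam d else 0)"
    by (rule sum.distrib)
  also have "(\<Sum>f\<in>{1..h}. if f \<in> AA m d \<and> Z (N - f) = 1 then betad m lam d else 0) = (\<Sum>f\<in>FF N. betad m lam d)"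
    unfolding FF_def by (rule sum.inter_filter[symmetric]) simp
  also have "\<dots> = betad m lam d * real (card (FF N))" by simp
  finally show ?thesis .
qed

lemma zz_Z:
  assumes lam: "-1 \<le> lam" "lam < 0"
  shows "zz m lam d n = Z n"
proof (induction n rule: less_induct)
  case (less n)
  show ?case
  proof (cases "n < h")
    case True
    have "zz m lam d n = yy m n" unfolding zz_def by (rule thr_lt[OF True])
    moreover have "\<not> n0 \<le> n" using True h_le_n0 by simp
    ultimately show ?thesis unfolding Z_def by simp
  next
    case False
    then have N: "h \<le> n" by simp
    have "zz m lam d n = step ((\<Sum>f\<in>{1..h}. cc m lam f d * zz m lam d (n - f)) - theta2 m lam d)"
      unfolding zz_def by (rule thr_ge[OF N])
    also have "(\<Sum>f\<in>{1..h}. cc m lam f d * zz m lam d (n - f)) = (\<Sum>f\<in>{1..h}. cc m lam f d * Z (n - f))"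
    proof (rule sum.cong[OF refl])
      fix f assume "f \<in> {1..h}"
      then have "n - f < n" using N by auto
      then show "cc m lam f d * zz m lam d (n - f) = cc m lam f d * Z (n - f)" using less.IH by simp
    qed
    also have "\<dots> = (\<Sum>f\<in>{1..h}. bb m f * Z (n - f)) + betad m lam d * real (card (FF n))" by (rule csum)
    finally have e: "zz m lam d n = step ((\<Sum>f\<in>{1..h}. bb m f * Z (n - f)) + betad m lam d * real (card (FF n)) - theta2 m lam d)" .
    define SS where "SS = (\<Sum>f\<in>{1..h}. bb m f * Z (n - f))"
    define T where "T = real (Tot m d)"
    define cn where "cn = real (card (FF n))"
    have Tp: "T > 0" unfolding T_def using Tot_pos by simp
    have V: "SS + betad m lam d * cn - theta2 m lam d = (SS - 2 * real r) + lam * ((cn + 1/8) / T - 1)"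
      unfolding theta2_def xi_def betad_def thetabar_def T_def[symmetric] using Tp by (simp add: field_simps)
    note sz = SZ[OF N, folded SS_def]
    have "zz m lam d n = step (SS + betad m lam d * cn - theta2 m lam d)"
      using e unfolding SS_def cn_def .
    then have e2: "zz m lam d n = step ((SS - 2 * real r) + lam * ((cn + 1/8) / T - 1))"
      by (simp only: V)
    have cn0: "cn \<ge> 0" unfolding cn_def by simp
    show ?thesis
    proof (cases "Z n = 1")
      case True
      have "card (FF n) < Tot m d" using cnt_lt[OF N True] unfolding Tot_def .
      then have "cn + 1 \<le> T" unfolding cn_def T_def by linarith
      then have "(cn + 1/8) / T < 1" using Tp by (simp add: divide_less_eq)
      then have "lam * ((cn + 1/8) / T - 1) > 0" using lam by (intro mult_neg_neg) auto
      then show ?thesis using e2 sz True by (simp add: step_def)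
    next
      case False
      then have Z0: "Z n = 0" using Z01 by blast
      show ?thesis
      proof (cases "n mod r \<le> d \<and> n div r = K0")
        case True
        have "Tot m d \<le> card (FF n)" using flip_cnt True unfolding Tot_def by blast
        then have "T \<le> cn" unfolding cn_def T_def by simp
        then have "(cn + 1/8) / T > 1" using Tp by (simp add: less_divide_eq)
        then have "lam * ((cn + 1/8) / T - 1) < 0" using lam by (intro mult_neg_pos) auto
        then show ?thesis using e2 sz True Z0 by (simp add: step_def)
      next
        case False
        have "lam * ((cn + 1/8) / T) \<le> 0" using lam cn0 Tp by (intro mult_nonpos_nonneg) auto
        then have "lam * ((cn + 1/8) / T - 1) \<le> 1" using lam by (simp add: right_diff_distrib)
        moreover have "SS \<le> 2 * real r - 2" using sz Z0 False by simp
        ultimately show ?thesis using e2 Z0 by (simp add: step_def)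
      qed
    qed
  qed
qed

end

theorem lemma21:
  fixes m d :: nat and lam :: real
  assumes "m \<ge> 1" and "rho m \<ge> 2"
    and "-1 \<le> lam" and "lam < 0"
    and "d \<le> rho m - 1"
  shows "\<forall>t::nat.
     zz m lam d (t + (L1 m d + hh m + d + 1 - rho m * (1 + pr m d)))
     = ww m d (t + hh m + d + 1 - rho m * (1 + pr m d))"
proof
  fix t :: nat
  interpret T m d
    using assms by unfold_locales auto
  have dr': "d < rho m" using dr .
  have le: "rho m * (1 + pr m d) \<le> hh m"
  proof -
    have "1 * pr m d \<le> (2 * rho m) * pr m d" by (rule mult_le_mono1) (use r_pos in simp)
    then have "1 + pr m d \<le> kk m" using rp_le[OF dr'] r_pos by linarith
    then show ?thesis unfolding h_def' by (rule mult_le_mono2)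
  qed
  define X where "X = t + (L1 m d + hh m + d + 1 - rho m * (1 + pr m d))"
  define Y where "Y = t + hh m + d + 1 - rho m * (1 + pr m d)"
  have 1: "zz m lam d X = Z X" using zz_Z assms(3,4) by blast
  have 2: "X = Y + L1 m d" unfolding X_def Y_def using le by linarith
  have 3: "Z (Y + L1 m d) = ww m d Y" by (rule ww_Z[symmetric])
  show "zz m lam d (t + (L1 m d + hh m + d + 1 - rho m * (1 + pr m d))) = ww m d (t + hh m + d + 1 - rho m * (1 + pr m d))"
    using 1 2 3 unfolding X_def[symmetric] Y_def[symmetric] by simp
qed


end
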